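(* Fix $m\ge 2$, a nonempty proper subset $\mathcal{S}\subsetneq[m]=\{1,\dots,m\}$ with complement $\mathcal{S}^c$, and $\sigma_e^2>0$. Consider the linear model $y=\mathbf{z}^\top\mathbf{u}+e$ with fixed (non-random) $\mathbf{u}\in\mathbb{R}^m$, where $\mathbb{E}(\mathbf{z})=0$, $\mathrm{Var}(\mathbf{z})=\Sigma$ is positive definite, and $e$ is independent of $\mathbf{z}$ with mean $0$ and variance $\sigma_e^2$. Define the fixed-effects heritability $$h^2(\mathbf{u};\Sigma)=\frac{\mathbf{u}^\top\Sigma\mathbf{u}}{\mathbf{u}^\top\Sigma\mathbf{u}+\sigma_e^2}.$$ Suppose that the heritability attributable to $\mathcal{S}$ is a quadratic form in $\mathbf{u}$, namely for every positive definite $\Sigma$ there is a symmetric $m\times m$ matrix $\Gamma(\Sigma)$ with $$h^2_{\mathcal{S}}(\mathbf{u};\Sigma)=\frac{\mathbf{u}^\top\Gamma(\Sigma)\mathbf{u}}{\mathbf{u}^\top\Sigma\mathbf{u}+\sigma_e^2}\quad\text{for all }\mathbf{u}\in\mathbb{R}^m$$ (equivalently, after normalizing $\mathrm{Var}(y)=1$, $h^2_{\mathcal S}=\mathbf{u}^\top\Gamma(\Sigma)\mathbf{u}$), and that for every positive definite $\Sigma$: (i) $0\le h^2_{\mathcal{S}}(\mathbf{u};\Sigma)\le h^2(\mathbf{u};\Sigma)$ for all $\mathbf{u}\in\mathbb{R}^m$; (ii) $h^2_{\mathcal{S}}(\mathbf{u};\Sigma)=h^2(\mathbf{u};\Sigma)$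 if and only if $\mathbf{u}_{\mathcal{S}^c}=0$; (iii) $\Gamma(\Sigma)$ does not depend on the block $\Sigma_{\mathcal{S}^c,\mathcal{S}^c}$, i.e. $\Gamma(\Sigma)=\Gamma(\Sigma')$ whenever $\Sigma,\Sigma'$ are positive definite and agree in all entries outside the $\mathcal{S}^c\times\mathcal{S}^c$ block. Then for every positive definite $\Sigma$ and every $\mathbf{u}\in\mathbb{R}^m$, $$h^2_{\mathcal{S}}(\mathbf{u};\Sigma)=\frac{\mathbf{u}^\top\Sigma\mathbf{u}-\mathbf{u}_{\mathcal{S}^c}^\top\Sigma_{\mathcal{S}^c\mid\mathcal{S}}\mathbf{u}_{\mathcal{S}^c}}{\mathbf{u}^\top\Sigma\mathbf{u}+\sigma_e^2},$$ where $\Sigma_{\mathcal{S}^c\mid\mathcal{S}}=\Sigma_{\mathcal{S}^c,\mathcal{S}^c}-\Sigma_{\mathcal{S}^c,\mathcal{S}}\Sigma_{\mathcal{S},\mathcal{S}}^{-1}\Sigma_{\mathcal{S},\mathcal{S}^c}$.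
   Context: For $\mathcal{S}_1,\mathcal{S}_2\subseteq[m]$, $\Sigma_{\mathcal{S}_1,\mathcal{S}_2}$ denotes the submatrix of $\Sigma$ with rows indexed by $\mathcal{S}_1$ and columns indexed by $\mathcal{S}_2$; $\mathbf{u}_{\mathcal{S}}$ denotes the subvector of $\mathbf{u}$ with coordinates in $\mathcal{S}$. *)

theory Defs
  imports "HOL-Analysis.Analysis"
begin

text \<open>Coordinates are indexed by a finite type 'm (so [m] = UNIV :: 'm set, m = CARD('m)).\<close>

definition pos_def_mat :: "real^'m^'m \<Rightarrow> bool" where
  "pos_def_mat A \<longleftrightarrow> transpose A = A \<and> (\<forall>x. x \<noteq> 0 \<longrightarrow> x \<bullet> (A *v x) > 0)"

definition symmetric_mat :: "real^'m^'m \<Rightarrow> bool" where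
  "symmetric_mat A \<longleftrightarrow> transpose A = A"

definition quad_form :: "real^'m^'m \<Rightarrow> real^'m \<Rightarrow> real" where
  "quad_form A u = u \<bullet> (A *v u)"

definition herit :: "real \<Rightarrow> real^'m^'m \<Rightarrow> real^'m \<Rightarrow> real" where
  "herit \<sigma>e2 \<Sigma> u = quad_form \<Sigma> u / (quad_form \<Sigma> u + \<sigma>e2)"

definition herit_S :: "(real^'m^'m \<Rightarrow> real^'m^'m) \<Rightarrow> real \<Rightarrow> real^'m^'m \<Rightarrow> real^'m \<Rightarrow> real" where
  "herit_S \<Gamma> \<sigma>e2 \<Sigma> u = quad_form (\<Gamma> \<Sigma>) u / (quad_form \<Sigma> u + \<sigma>e2)"

definition block_inv :: "real^'m^'m \<Rightarrow> 'm set \<Rightarrow> 'm \<Rightarrow> 'm \<Rightarrow> real" where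
  "block_inv A S = (THE B. (\<forall>i j. (i \<notin> S \<or> j \<notin> S) \<longrightarrow> B i j = 0) \<and>
      (\<forall>i\<in>S. \<forall>j\<in>S. (\<Sum>k\<in>S. A $ i $ k * B k j) = (if i = j then 1 else 0)))"

text \<open>Conditional covariance Sigma_{T|S} = Sigma_{T,T} - Sigma_{T,S} Sigma_{S,S}^{-1} Sigma_{S,T}
  (entries for i, j in T, here T = complement of S).\<close>
definition cond_cov :: "real^'m^'m \<Rightarrow> 'm set \<Rightarrow> 'm \<Rightarrow> 'm \<Rightarrow> real" where
  "cond_cov A S i j = A $ i $ j - (\<Sum>k\<in>S. \<Sum>l\<in>S. A $ i $ k * block_inv A S k l * A $ l $ j)"

definition cond_quad :: "real^'m^'m \<Rightarrow> 'm set \<Rightarrow> real^'m \<Rightarrow> real" where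
  "cond_quad A S u = (\<Sum>i\<in>-S. \<Sum>j\<in>-S. u $ i * cond_cov A S i j * u $ j)"

end

theory Submission
  imports Defs
begin

lemma qf: "quad_form A x = (\<Sum>i\<in>UNIV. \<Sum>j\<in>UNIV. x$i * A$i$j * x$j)"
  unfolding quad_form_def inner_vec_def matrix_vector_mult_def
  by (simp add: sum_distrib_left mult.assoc mult.commute mult.left_commute)

lemma pd_sym: "pos_def_mat A \<Longrightarrow> A$i$j = A$j$i"
  unfolding pos_def_mat_def by (metis transpose_def vec_lambda_beta)

lemma pd_nonneg: "pos_def_mat A \<Longrightarrow> quad_form A x \<ge> 0"
  unfolding pos_def_mat_def quad_form_def by (cases "x = 0") (auto intro: less_imp_le)

lemma pd_pos: "pos_def_mat A \<Longrightarrow> x \<noteq> 0 \<Longrightarrow> quad_form A x > 0"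
  unfolding pos_def_mat_def quad_form_def by auto

lemma block_inv_prop:
  fixes A :: "real^'m^'m"
  assumes pd: "pos_def_mat A"
  shows "(\<forall>i j. (i \<notin> S \<or> j \<notin> S) \<longrightarrow> block_inv A S i j = 0) \<and>
      (\<forall>i\<in>S. \<forall>j\<in>S. (\<Sum>k\<in>S. A $ i $ k * block_inv A S k j) = (if i = j then 1 else 0))"
proof -
  define M :: "real^'m^'m" where "M = (\<chi> i k. if i \<in> S \<and> k \<in> S then A$i$k else if i = k then 1 else 0)"
  define P where "P = (\<lambda>B::'m\<Rightarrow>'m\<Rightarrow>real. (\<forall>i j. (i \<notin> S \<or> j \<notin> S) \<longrightarrow> B i j = 0) \<and>
      (\<forall>i\<in>S. \<forall>j\<in>S. (\<Sum>k\<in>S. A $ i $ k * B k j) = (if i = j then 1 else 0)))"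
  have inj: "x = 0" if "M *v x = 0" for x
  proof -
    define v :: "real^'m" where "v = (\<chi> i. if i \<in> S then x$i else 0)"
    have "quad_form M x = 0" using that unfolding quad_form_def by simp
    moreover have "quad_form M x = quad_form A v + (\<Sum>i\<in>UNIV. if i \<notin> S then x$i * x$i else 0)"
    proof -
      have "quad_form M x = (\<Sum>i\<in>UNIV. \<Sum>j\<in>UNIV. v$i * A$i$j * v$j + (if i = j \<and> i \<notin> S then x$i * x$j else 0))"
        unfolding qf by (intro sum.cong refl) (auto simp: M_def v_def)
      also have "\<dots> = quad_form A v + (\<Sum>i\<in>UNIV. \<Sum>j\<in>UNIV. (if i = j \<and> i \<notin> S then x$i * x$j else 0))"
        unfolding qf by (simp add: sum.distrib)
      also have "(\<Sum>i\<in>UNIV. \<Sum>j\<in>UNIV. (if i = j \<and> i \<notin> S then x$i * x$j else 0)) = (\<Sum>i\<in>UNIV. if i \<notin> S then x$i * x$i else 0)"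
        by (intro sum.cong refl) (auto simp: if_distrib cong: if_cong)
      finally show ?thesis .
    qed
    ultimately have h: "quad_form A v + (\<Sum>i\<in>UNIV. if i \<notin> S then x$i * x$i else 0) = 0" by simp
    have n1: "quad_form A v \<ge> 0" using pd_nonneg[OF pd] .
    have n2: "(\<Sum>i\<in>UNIV. if i \<notin> S then x$i * x$i else 0) \<ge> 0" by (intro sum_nonneg) auto
    have "quad_form A v = 0" using h n1 n2 by linarith
    hence v0: "v = 0" using pd_pos[OF pd, of v] by fastforce
    have "(\<Sum>i\<in>UNIV. if i \<notin> S then x$i * x$i else 0) = 0" using h n1 n2 by linarith
    hence "\<forall>i\<in>UNIV. (if i \<notin> S then x$i * x$i else 0) = 0"
      by (subst (asm) sum_nonneg_eq_0_iff) auto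
    with v0 show "x = 0" unfolding v_def by (auto simp: vec_eq_iff split: if_splits)
  qed
  then obtain N where "N ** M = mat 1" using matrix_left_invertible_ker by blast
  hence MN: "M ** N = mat 1" using matrix_left_right_inverse by blast
  have ex: "P (\<lambda>k l. if k \<in> S \<and> l \<in> S then N$k$l else 0)"
    unfolding P_def
  proof (intro conjI ballI allI impI)
    fix i j assume i: "i \<in> S" and j: "j \<in> S"
    have "(\<Sum>k\<in>UNIV. M$i$k * N$k$j) = (\<Sum>k\<in>UNIV. if k \<in> S then A$i$k * N$k$j else 0)"
      using i by (intro sum.cong) (auto simp: M_def)
    also have "\<dots> = (\<Sum>k\<in>S. A$i$k * N$k$j)" by (simp add: sum.If_cases)
    also have "\<dots> = (\<Sum>k\<in>S. A $ i $ k * (if k \<in> S \<and> j \<in> S then N$k$j else 0))"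
      using j by (intro sum.cong) auto
    finally have "(\<Sum>k\<in>S. A $ i $ k * (if k \<in> S \<and> j \<in> S then N$k$j else 0)) = (\<Sum>k\<in>UNIV. M$i$k * N$k$j)" by simp
    also have "\<dots> = (M ** N)$i$j" by (simp add: matrix_matrix_mult_def)
    finally show "(\<Sum>k\<in>S. A $ i $ k * (if k \<in> S \<and> j \<in> S then N$k$j else 0)) = (if i = j then 1 else 0)"
      using MN by (simp add: mat_def)
  qed auto
  have un: "B1 = B2" if p1: "P B1" and p2: "P B2" for B1 B2
  proof (intro ext)
    fix k j
    define e :: "real^'m" where "e = (\<chi> k. B1 k j - B2 k j)"
    have "M *v e = 0"
    proof (subst vec_eq_iff, intro allI)
      fix i
      show "(M *v e)$i = 0$i"
      proof (cases "i \<in> S")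
        case True
        have "(M *v e)$i = (\<Sum>k\<in>UNIV. if k \<in> S then A$i$k * e$k else 0)"
          unfolding matrix_vector_mult_def vec_lambda_beta using True by (intro sum.cong) (auto simp: M_def)
        also have "\<dots> = (\<Sum>k\<in>S. A$i$k * e$k)" by (simp add: sum.If_cases)
        finally have "(M *v e)$i = (\<Sum>k\<in>S. A$i$k * e$k)" .
        also have "\<dots> = (\<Sum>k\<in>S. A$i$k * B1 k j) - (\<Sum>k\<in>S. A$i$k * B2 k j)"
          by (simp add: e_def right_diff_distrib sum_subtractf)
        also have "\<dots> = 0"
          using p1 p2 True unfolding P_def by (cases "j \<in> S") auto
        finally show ?thesis by simp
      next
        case False
        have "(M *v e)$i = (\<Sum>k\<in>UNIV. if k = i then e$k else 0)"
          unfolding matrix_vector_mult_def vec_lambda_beta using False by (intro sum.cong) (auto simp: M_def)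
        also have "\<dots> = e$i" by simp
        also have "\<dots> = 0" using p1 p2 False unfolding P_def e_def by simp
        finally show ?thesis by simp
      qed
    qed
    hence "e = 0" by (rule inj)
    thus "B1 k j = B2 k j" unfolding e_def by (simp add: vec_eq_iff)
  qed
  have "\<exists>!B. P B" using ex un by blast
  hence "P (THE B. P B)" by (rule theI')
  thus ?thesis unfolding P_def block_inv_def by simp
qed

lemma sym_entry: "symmetric_mat A \<Longrightarrow> A$i$j = A$j$i"
  unfolding symmetric_mat_def by (metis transpose_def vec_lambda_beta)

lemma sym_dot: "symmetric_mat (A::real^'m^'m) \<Longrightarrow> x \<bullet> (A *v y) = y \<bullet> (A *v x)"
  unfolding symmetric_mat_def by (metis dot_lmul_matrix transpose_matrix_vector inner_commute)

lemma pd_symm: "pos_def_mat A \<Longrightarrow> symmetric_mat A"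
  unfolding pos_def_mat_def symmetric_mat_def by simp

lemma q_add: "symmetric_mat (A::real^'m^'m) \<Longrightarrow>
   quad_form A (x + y) = quad_form A x + 2 * (x \<bullet> (A *v y)) + quad_form A y"
  unfolding quad_form_def using sym_dot[of A x y]
  by (simp add: matrix_vector_right_distrib inner_add_left inner_add_right)

lemma q_diff_mat: "quad_form (A - B) x = quad_form A x - quad_form B x"
  unfolding quad_form_def by (simp add: matrix_vector_mult_diff_rdistrib inner_diff_right)

lemma dot_disj: "(\<And>i. x$i = 0 \<or> y$i = 0) \<Longrightarrow> x \<bullet> (y::real^'m) = 0"
  unfolding inner_vec_def by (intro sum.neutral) (metis inner_real_def mult_eq_0_iff)

lemma dot_supp: "(\<And>i. i \<notin> S \<Longrightarrow> x$i = 0) \<Longrightarrow> x \<bullet> (y::real^'m) = (\<Sum>i\<in>S. x$i * y$i)"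
  unfolding inner_vec_def inner_real_def
  by (rule sum.mono_neutral_right) auto

lemma q_block: 
  fixes A A' :: "real^'m^'m"
  assumes "\<And>i j. \<not> (i \<notin> S \<and> j \<notin> S) \<Longrightarrow> A$i$j = A'$i$j"
  shows "quad_form A x - quad_form A' x = quad_form A (\<chi> i. if i \<in> S then 0 else x$i) - quad_form A' (\<chi> i. if i \<in> S then 0 else x$i)"
proof -
  have "quad_form A x - quad_form A' x = (\<Sum>i\<in>UNIV. \<Sum>j\<in>UNIV. x$i * (A$i$j - A'$i$j) * x$j)"
    unfolding qf by (simp add: sum_subtractf[symmetric] algebra_simps)
  also have "\<dots> = (\<Sum>i\<in>UNIV. \<Sum>j\<in>UNIV. (\<chi> i. if i \<in> S then 0 else x$i)$i * (A$i$j - A'$i$j) * (\<chi> i. if i \<in> S then 0 else x$i)$j)"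
    using assms by (intro sum.cong refl) auto
  also have "\<dots> = quad_form A (\<chi> i. if i \<in> S then 0 else x$i) - quad_form A' (\<chi> i. if i \<in> S then 0 else x$i)"
    unfolding qf by (simp only: sum_subtractf[symmetric] algebra_simps)
  finally show ?thesis .
qed

locale blk =
  fixes Sg :: "real^'m::finite^'m" and S :: "'m set"
  assumes pd: "pos_def_mat Sg"
begin

definition "B = block_inv Sg S"
definition "av w k = (Sg *v w)$k"
definition "Kf w = (\<Sum>k\<in>S. \<Sum>l\<in>S. av w k * B k l * av w l)"
definition "PP i j = (\<Sum>k\<in>S. \<Sum>l\<in>S. Sg$i$k * B k l * Sg$l$j)"
definition "vs w = (\<chi> k. if k \<in> S then - (\<Sum>l\<in>S. B k l * av w l) else 0)"

lemma B0: "i \<notin> S \<or> j \<notin> S \<Longrightarrow> B i j = 0"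
  using block_inv_prop[OF pd, of S] unfolding B_def by blast

lemma Binv: "i \<in> S \<Longrightarrow> j \<in> S \<Longrightarrow> (\<Sum>k\<in>S. Sg$i$k * B k j) = (if i = j then 1 else 0)"
  using block_inv_prop[OF pd, of S] unfolding B_def by blast

lemma symS: "Sg$i$j = Sg$j$i" using pd_sym[OF pd] .

lemma KP: "(\<Sum>i\<in>UNIV. \<Sum>j\<in>UNIV. w$i * PP i j * w$j) = Kf w"
proof -
  have "(\<Sum>i\<in>UNIV. \<Sum>j\<in>UNIV. w$i * PP i j * w$j) =
     (\<Sum>i\<in>UNIV. \<Sum>j\<in>UNIV. \<Sum>k\<in>S. \<Sum>l\<in>S. (Sg$k$i * w$i) * B k l * (Sg$l$j * w$j))"
    unfolding PP_def by (simp add: sum_distrib_left sum_distrib_right symS ac_simps)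
  also have "\<dots> = (\<Sum>k\<in>S. \<Sum>l\<in>S. \<Sum>i\<in>UNIV. \<Sum>j\<in>UNIV. (Sg$k$i * w$i) * B k l * (Sg$l$j * w$j))"
    by (simp only: sum.swap[of _ UNIV S])
  also have "\<dots> = Kf w"
    unfolding Kf_def av_def matrix_vector_mult_def vec_lambda_beta
    by (simp add: sum_distrib_left sum_distrib_right ac_simps)
  finally show ?thesis .
qed

lemma V1: "i \<in> S \<Longrightarrow> (Sg *v vs w)$i = - av w i"
proof -
  assume i: "i \<in> S"
  have "(Sg *v vs w)$i = (\<Sum>k\<in>UNIV. if k \<in> S then Sg$i$k * (- (\<Sum>l\<in>S. B k l * av w l)) else 0)"
    unfolding matrix_vector_mult_def vec_lambda_beta vs_def by (intro sum.cong) auto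
  also have "\<dots> = (\<Sum>k\<in>S. Sg$i$k * (- (\<Sum>l\<in>S. B k l * av w l)))" by (simp add: sum.If_cases)
  also have "\<dots> = - (\<Sum>l\<in>S. (\<Sum>k\<in>S. Sg$i$k * B k l) * av w l)"
  proof -
    have "(\<Sum>k\<in>S. Sg$i$k * (- (\<Sum>l\<in>S. B k l * av w l))) = - (\<Sum>k\<in>S. \<Sum>l\<in>S. Sg$i$k * B k l * av w l)"
      by (simp add: sum_distrib_left sum_negf mult.assoc)
    also have "\<dots> = - (\<Sum>l\<in>S. \<Sum>k\<in>S. Sg$i$k * B k l * av w l)" by (subst sum.swap) (rule refl)
    also have "\<dots> = - (\<Sum>l\<in>S. (\<Sum>k\<in>S. Sg$i$k * B k l) * av w l)" by (simp add: sum_distrib_right)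
    finally show ?thesis .
  qed
  also have "\<dots> = - (\<Sum>l\<in>S. (if i = l then 1 else 0) * av w l)"
    using i by (simp add: Binv)
  also have "\<dots> = - av w i" using i
    by (subst sum.cong[OF refl, of _ _ "\<lambda>l. if l = i then av w l else 0"]) auto
  finally show ?thesis .
qed

lemma vs_in: "k \<in> S \<Longrightarrow> vs w $ k = - (\<Sum>l\<in>S. B k l * av w l)" unfolding vs_def by simp

lemma vs_supp: "i \<notin> S \<Longrightarrow> vs w $ i = 0" unfolding vs_def by simp

lemma V2: "quad_form Sg (vs w + w) = quad_form Sg w - Kf w"
proof -
  have sy: "symmetric_mat Sg" using pd_symm[OF pd] .
  have d1: "vs w \<bullet> (Sg *v w) = - Kf w"
  proof -
    have "vs w \<bullet> (Sg *v w) = (\<Sum>k\<in>S. vs w $ k * (Sg *v w)$k)"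
      by (rule dot_supp) (simp add: vs_supp)
    also have "\<dots> = (\<Sum>k\<in>S. - (\<Sum>l\<in>S. B k l * av w l) * av w k)"
      by (intro sum.cong) (auto simp: vs_def av_def)
    also have "\<dots> = - Kf w"
      unfolding Kf_def by (simp add: sum_distrib_left sum_distrib_right sum_negf ac_simps)
    finally show ?thesis .
  qed
  have d2: "quad_form Sg (vs w) = Kf w"
  proof -
    have "quad_form Sg (vs w) = (\<Sum>k\<in>S. vs w $ k * (Sg *v vs w)$k)"
      unfolding quad_form_def by (rule dot_supp) (simp add: vs_supp)
    also have "\<dots> = (\<Sum>k\<in>S. - (\<Sum>l\<in>S. B k l * av w l) * - av w k)"
      by (intro sum.cong) (auto simp: vs_in V1)
    also have "\<dots> = Kf w"
      unfolding Kf_def by (simp add: sum_distrib_left sum_distrib_right sum_negf ac_simps)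
    finally show ?thesis .
  qed
  show ?thesis using q_add[OF sy, of "vs w" w] d1 d2 by simp
qed

lemma V3: "i \<in> S \<Longrightarrow> (Sg *v (vs w + w))$i = 0"
  by (simp add: matrix_vector_right_distrib V1 av_def)

lemma qmin:
  assumes v: "\<And>i. i \<notin> S \<Longrightarrow> v$i = 0"
  shows "quad_form Sg (v + w) \<ge> quad_form Sg w - Kf w"
proof -
  have sy: "symmetric_mat Sg" using pd_symm[OF pd] .
  have e: "v + w = (v - vs w) + (vs w + w)" by simp
  have m: "(v - vs w) \<bullet> (Sg *v (vs w + w)) = 0"
    by (rule dot_disj) (metis V3 v vs_supp diff_self vector_minus_component)
  have "quad_form Sg (v + w) = quad_form Sg (v - vs w) + quad_form Sg (vs w + w)"
    by (subst e, subst q_add[OF sy]) (simp add: m)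
  thus ?thesis using V2 pd_nonneg[OF pd, of "v - vs w"] by simp
qed

lemma cq: "cond_quad Sg S u = quad_form Sg (\<chi> i. if i \<in> S then 0 else u$i) - Kf (\<chi> i. if i \<in> S then 0 else u$i)"
proof -
  define w :: "real^'m" where "w = (\<chi> i. if i \<in> S then 0 else u$i)"
  have "cond_quad Sg S u = (\<Sum>i\<in>-S. \<Sum>j\<in>-S. w$i * (Sg$i$j - PP i j) * w$j)"
    unfolding cond_quad_def cond_cov_def PP_def w_def
    by (intro sum.cong) (auto simp: mult.assoc B_def)
  also have "\<dots> = (\<Sum>i\<in>UNIV. \<Sum>j\<in>UNIV. w$i * (Sg$i$j - PP i j) * w$j)"
  proof (rule sum.mono_neutral_cong_left)
    fix i assume "i \<in> -S"
    show "(\<Sum>j\<in>-S. w$i * (Sg$i$j - PP i j) * w$j) = (\<Sum>j\<in>UNIV. w$i * (Sg$i$j - PP i j) * w$j)"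
      by (rule sum.mono_neutral_left) (auto simp: w_def)
  qed (auto simp: w_def)
  also have "\<dots> = quad_form Sg w - (\<Sum>i\<in>UNIV. \<Sum>j\<in>UNIV. w$i * PP i j * w$j)"
    unfolding qf by (simp add: sum_subtractf[symmetric] algebra_simps)
  also have "\<dots> = quad_form Sg w - Kf w" by (simp add: KP)
  finally show ?thesis unfolding w_def .
qed

definition "Sp (\<epsilon>::real) = (\<chi> i j. if i \<notin> S \<and> j \<notin> S then (PP i j + PP j i)/2 + (if i = j then \<epsilon> else 0) else Sg$i$j)"

lemma Sp_agree: "\<not> (i \<notin> S \<and> j \<notin> S) \<Longrightarrow> Sg$i$j = Sp \<epsilon> $i$j"
  unfolding Sp_def by auto

lemma Sp_w:
  assumes w: "\<And>i. i \<in> S \<Longrightarrow> w$i = 0"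
  shows "quad_form (Sp \<epsilon>) w = Kf w + \<epsilon> * (w \<bullet> w)"
proof -
  have "quad_form (Sp \<epsilon>) w = (\<Sum>i\<in>UNIV. \<Sum>j\<in>UNIV. (w$i * PP i j * w$j)/2 + (w$j * PP j i * w$i)/2 + (if i = j then \<epsilon> * (w$i * w$j) else 0))"
    unfolding qf Sp_def using w by (intro sum.cong refl) (auto simp: algebra_simps add_divide_distrib)
  also have "\<dots> = (\<Sum>i\<in>UNIV. \<Sum>j\<in>UNIV. w$i * PP i j * w$j)/2 + (\<Sum>i\<in>UNIV. \<Sum>j\<in>UNIV. w$j * PP j i * w$i)/2
      + (\<Sum>i\<in>UNIV. \<Sum>j\<in>UNIV. if i = j then \<epsilon> * (w$i * w$j) else 0)"
    by (simp add: sum.distrib sum_divide_distrib)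
  also have "(\<Sum>i\<in>UNIV. \<Sum>j\<in>UNIV. w$j * PP j i * w$i) = (\<Sum>i\<in>UNIV. \<Sum>j\<in>UNIV. w$i * PP i j * w$j)"
    by (rule sum.swap)
  also have "(\<Sum>i\<in>UNIV. \<Sum>j\<in>UNIV. if i = j then \<epsilon> * (w$i * w$j) else 0) = \<epsilon> * (w \<bullet> w)"
    unfolding inner_vec_def by (simp add: sum_distrib_left)
  finally show ?thesis by (simp add: KP)
qed

lemma Sp_pd: assumes e: "\<epsilon> > 0" shows "pos_def_mat (Sp \<epsilon>)"
  unfolding pos_def_mat_def
proof (intro conjI allI impI)
  show "transpose (Sp \<epsilon>) = Sp \<epsilon>"
    unfolding transpose_def Sp_def by (simp add: vec_eq_iff symS add.commute)
next
  fix x :: "real^'m" assume x: "x \<noteq> 0"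
  define w :: "real^'m" where "w = (\<chi> i. if i \<in> S then 0 else x$i)"
  define v :: "real^'m" where "v = (\<chi> i. if i \<in> S then x$i else 0)"
  have xvw: "x = v + w" unfolding v_def w_def by (simp add: vec_eq_iff)
  have qb: "quad_form (Sp \<epsilon>) x - quad_form Sg x = quad_form (Sp \<epsilon>) w - quad_form Sg w"
    unfolding w_def by (rule q_block) (auto simp: Sp_def)
  have spw: "quad_form (Sp \<epsilon>) w = Kf w + \<epsilon> * (w \<bullet> w)" by (rule Sp_w) (simp add: w_def)
  have mn: "quad_form Sg x \<ge> quad_form Sg w - Kf w"
    unfolding xvw by (rule qmin) (simp add: v_def)
  show "x \<bullet> (Sp \<epsilon> *v x) > 0"
  proof (cases "w = 0")
    case True
    have "quad_form (Sp \<epsilon>) x = quad_form Sg x" using qb True by (simp add: quad_form_def)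
    thus ?thesis using pd_pos[OF pd x] by (simp add: quad_form_def)
  next
    case False
    have "\<epsilon> * (w \<bullet> w) > 0" using False e by simp
    thus ?thesis using qb spw mn by (simp add: quad_form_def)
  qed
qed

end

theorem proposition1:
  fixes S :: "('m::finite) set" and \<sigma>e2 :: real
    and \<Gamma> :: "real^'m^'m \<Rightarrow> real^'m^'m"
  assumes m2: "CARD('m) \<ge> 2"
    and S_ne: "S \<noteq> {}" and S_proper: "S \<noteq> UNIV"
    and \<sigma>_pos: "\<sigma>e2 > 0"
    and \<Gamma>_sym: "\<And>\<Sigma>. pos_def_mat \<Sigma> \<Longrightarrow> symmetric_mat (\<Gamma> \<Sigma>)"
    and cond_i: "\<And>\<Sigma> u. pos_def_mat \<Sigma> \<Longrightarrow>
        0 \<le> herit_S \<Gamma> \<sigma>e2 \<Sigma> u \<and> herit_S \<Gamma> \<sigma>e2 \<Sigma> u \<le> herit \<sigma>e2 \<Sigma> u"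
    and cond_ii: "\<And>\<Sigma> u. pos_def_mat \<Sigma> \<Longrightarrow>
        (herit_S \<Gamma> \<sigma>e2 \<Sigma> u = herit \<sigma>e2 \<Sigma> u \<longleftrightarrow> (\<forall>i\<in>-S. u $ i = 0))"
    and cond_iii: "\<And>\<Sigma> \<Sigma>'. pos_def_mat \<Sigma> \<Longrightarrow> pos_def_mat \<Sigma>' \<Longrightarrow>
        (\<forall>i j. \<not> (i \<notin> S \<and> j \<notin> S) \<longrightarrow> \<Sigma> $ i $ j = \<Sigma>' $ i $ j) \<Longrightarrow> \<Gamma> \<Sigma> = \<Gamma> \<Sigma>'"
  shows "\<forall>\<Sigma> u. pos_def_mat \<Sigma> \<longrightarrow>
     herit_S \<Gamma> \<sigma>e2 \<Sigma> u = (quad_form \<Sigma> u - cond_quad \<Sigma> S u) / (quad_form \<Sigma> u + \<sigma>e2)"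
proof (intro allI impI)
  fix Sg :: "real^'m^'m" and u :: "real^'m"
  assume pdS: "pos_def_mat Sg"
  interpret blk Sg S by unfold_locales (rule pdS)
  have qi: "0 \<le> quad_form (\<Gamma> A) x \<and> quad_form (\<Gamma> A) x \<le> quad_form A x" if pA: "pos_def_mat A" for A x
  proof -
    have d: "quad_form A x + \<sigma>e2 > 0" using pd_nonneg[OF pA, of x] \<sigma>_pos by linarith
    from cond_i[OF pA, of x] d show ?thesis
      unfolding herit_S_def herit_def by (simp add: divide_right_mono zero_le_divide_iff divide_le_cancel)
  qed
  have qii: "quad_form (\<Gamma> Sg) x = quad_form Sg x \<longleftrightarrow> (\<forall>i\<in>-S. x$i = 0)" for x
  proof -
    have d: "quad_form Sg x + \<sigma>e2 > 0" using pd_nonneg[OF pdS, of x] \<sigma>_pos by linarith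
    from cond_ii[OF pdS, of x] d show ?thesis
      unfolding herit_S_def herit_def by simp
  qed
  define D where "D = Sg - \<Gamma> Sg"
  have qD: "quad_form D x = quad_form Sg x - quad_form (\<Gamma> Sg) x" for x
    unfolding D_def by (rule q_diff_mat)
  have Dnn: "quad_form D x \<ge> 0" for x using qi[OF pdS, of x] qD[of x] by linarith
  have symD: "symmetric_mat D"
  proof -
    have s1: "symmetric_mat (\<Gamma> Sg)" by (rule \<Gamma>_sym[OF pdS])
    show ?thesis unfolding symmetric_mat_def D_def
      using sym_entry[OF s1] symS by (simp add: vec_eq_iff transpose_def)
  qed
  have Dx0: "D *v x = 0" if xs: "\<And>i. i \<notin> S \<Longrightarrow> x$i = 0" for x
  proof (rule ccontr)
    assume nz: "D *v x \<noteq> 0"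
    define z where "z = D *v x"
    define c where "c = z \<bullet> z"
    define d where "d = quad_form D z"
    have c: "c > 0" unfolding c_def z_def using nz by simp
    have d: "d \<ge> 0" unfolding d_def by (rule Dnn)
    have qx: "quad_form D x = 0" using qii[of x] xs qD[of x] by simp
    define t where "t = - c / (d + 1)"
    have "quad_form D (x + t *\<^sub>R z) = quad_form D x + 2 * (x \<bullet> (D *v (t *\<^sub>R z))) + quad_form D (t *\<^sub>R z)"
      by (rule q_add[OF symD])
    also have "x \<bullet> (D *v (t *\<^sub>R z)) = t * c"
      using sym_dot[OF symD, of x z] unfolding c_def z_def by (simp add: matrix_vector_mult_scaleR)
    also have "quad_form D (t *\<^sub>R z) = t * t * d"
      unfolding d_def quad_form_def by (simp add: matrix_vector_mult_scaleR)
    finally have e: "quad_form D (x + t *\<^sub>R z) = 2 * (t * c) + t * t * d" using qx by simp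
    have "t * t * d \<le> t * t * (d + 1)" by (intro mult_left_mono) auto
    also have "t * t * (d + 1) = - (t * c)"
    proof -
      have nz: "d + 1 \<noteq> 0" using d by linarith
      have td: "t * (d + 1) = - c" unfolding t_def using nz by simp
      show ?thesis by (simp only: mult.assoc td)
    qed
    finally have "t * t * d \<le> - (t * c)" .
    moreover have "t * c < 0" unfolding t_def using c d by (simp add: mult_pos_pos)
    ultimately have "quad_form D (x + t *\<^sub>R z) < 0" using e by linarith
    thus False using Dnn[of "x + t *\<^sub>R z"] by linarith
  qed
  have dec: "quad_form (\<Gamma> Sg) (v + w) = quad_form Sg (v + w) - quad_form Sg w + quad_form (\<Gamma> Sg) w"
    if vs: "\<And>i. i \<notin> S \<Longrightarrow> v$i = 0" for v w
  proof -
    have Dv: "D *v v = 0" by (rule Dx0[OF vs])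
    have "quad_form D (v + w) = quad_form D v + 2 * (v \<bullet> (D *v w)) + quad_form D w"
      by (rule q_add[OF symD])
    also have "v \<bullet> (D *v w) = 0" using sym_dot[OF symD, of v w] Dv by simp
    also have "quad_form D v = 0" unfolding quad_form_def using Dv by simp
    finally have "quad_form D (v + w) = quad_form D w" by simp
    thus ?thesis using qD[of "v + w"] qD[of w] by linarith
  qed
  define w :: "real^'m" where "w = (\<chi> i. if i \<in> S then 0 else u$i)"
  define v :: "real^'m" where "v = (\<chi> i. if i \<in> S then u$i else 0)"
  have uvw: "u = v + w" unfolding v_def w_def by (simp add: vec_eq_iff)
  have upper: "quad_form (\<Gamma> Sg) w \<le> Kf w"
  proof (rule field_le_epsilon)
    fix e :: real assume e: "e > 0"
    define \<epsilon> where "\<epsilon> = e / (w \<bullet> w + 1)"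
    have ww: "w \<bullet> w \<ge> 0" by simp
    have wp: "w \<bullet> w + 1 > 0" using ww by linarith
    have ep: "\<epsilon> > 0" unfolding \<epsilon>_def using e wp by (rule divide_pos_pos)
    have G: "\<Gamma> Sg = \<Gamma> (Sp \<epsilon>)"
      by (rule cond_iii[OF pdS Sp_pd[OF ep]]) (auto intro: Sp_agree)
    have "quad_form (\<Gamma> Sg) w \<le> quad_form (Sp \<epsilon>) w" using qi[OF Sp_pd[OF ep], of w] G by simp
    also have "\<dots> = Kf w + \<epsilon> * (w \<bullet> w)" by (rule Sp_w) (simp add: w_def)
    also have "\<epsilon> * (w \<bullet> w) \<le> e"
    proof -
      have "\<epsilon> * (w \<bullet> w) = e * ((w \<bullet> w) / (w \<bullet> w + 1))" unfolding \<epsilon>_def using wp by (simp add: field_simps)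
      also have "\<dots> \<le> e * 1" using e ww wp by (intro mult_left_mono) (auto simp: divide_le_eq)
      finally show ?thesis by simp
    qed
    finally show "quad_form (\<Gamma> Sg) w \<le> Kf w + e" by simp
  qed
  have lower: "quad_form (\<Gamma> Sg) w \<ge> Kf w"
  proof -
    have "0 \<le> quad_form (\<Gamma> Sg) (vs w + w)" using qi[OF pdS] by blast
    also have "\<dots> = quad_form Sg (vs w + w) - quad_form Sg w + quad_form (\<Gamma> Sg) w"
      by (rule dec) (simp add: vs_supp)
    finally show ?thesis using V2[of w] by simp
  qed
  have "quad_form (\<Gamma> Sg) u = quad_form Sg u - quad_form Sg w + quad_form (\<Gamma> Sg) w"
    unfolding uvw by (rule dec) (simp add: v_def)
  also have "\<dots> = quad_form Sg u - cond_quad Sg S u"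
    using upper lower cq[of u] unfolding w_def by simp
  finally show "herit_S \<Gamma> \<sigma>e2 Sg u = (quad_form Sg u - cond_quad Sg S u) / (quad_form Sg u + \<sigma>e2)"
    unfolding herit_S_def by simp
qed

end
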